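(* Consider a credit-attribution game with authors $N=\{1,\dots,n\}$ and papers $P_1,\dots,P_m$, and let $p=(p_1,\dots,p_n)\in[0,1]^n$. For every author $x$, the Shapley values of $x$ in the reliability extensions (with parameters $p$) of the full credit game $\Gamma_{FC}$ and of the full obligation game $\Gamma_{FO}$ are \[ Sh[\overline{v_{FC}}](x)=p_{x}\sum_{k\in Pap_{x}} w_{k}\Big[\sum_{S\subseteq Auth_{k}\setminus \{x\}}\frac{ \Pi_{\emptyset,S} }{(n_{k}-|S|)\binom{n_k}{|S|}} \Big], \qquad Sh[\overline{v_{FO}}](x)= \sum_{k\in Pap_{x}} \frac{w_{k}}{n_{k}}\, \Pi_{Auth_{k},Auth_{k}}, \] where $n_k=|Auth_k|$.
   Context: A credit-attribution game consists of a set of authors $N=\{1,\dots,n\}$ and papers $P_1,\dots,P_m$; each paper $P_k$ has a nonempty author set $Auth_k\subseteq N$ and a weight $w_k\in\mathbb{R}_+$. $Pap_x$ is the set of (indices of) papers having $x$ as an author. The full credit game has $v_{FC}(S)=\sum$ of $w_k$ over papers $k$ with $Auth_k\cap S\ne\emptyset$; the full obligation game has $v_{FO}(S)=\sum$ of $w_k$ over papers $k$ with $Auth_k\subseteq S$. For $T\subseteq S\subseteq N$, $\Pi_{T,S}=\prod_{i\in T}p_i\prod_{i\in S\setminus T}(1-p_i)$ (empty products equal $1$). The reliability extension of $(N,v)$ with parameters $p$ is $(N,\overline v)$ with $\overline v(S)=\sum_{T\subseteq S}v(T)\Pi_{T,S}$. The Shapley value is $Sh[v](x)=\frac1{n!}\sum_{\pi}[v(S^x_\pi\cup\{x\})-v(S^x_\pi)]$,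 the sum over all permutations $\pi$ of $N$, with $S^x_\pi$ the set of players preceding $x$ in $\pi$. *)

theory Defs
  imports Complex_Main
begin

text \<open>Authors are N = {1..n}; papers are indexed by k in {1..m};
  Auth k is the author set of paper k, w k its weight, p i the reliability of author i.\<close>

definition Pap :: "nat \<Rightarrow> (nat \<Rightarrow> nat set) \<Rightarrow> nat \<Rightarrow> nat set" where
  "Pap m Auth x = {k \<in> {1..m}. x \<in> Auth k}"

definition v_FC :: "nat \<Rightarrow> (nat \<Rightarrow> nat set) \<Rightarrow> (nat \<Rightarrow> real) \<Rightarrow> nat set \<Rightarrow> real" where
  "v_FC m Auth w S = (\<Sum>k\<in>{k \<in> {1..m}. Auth k \<inter> S \<noteq> {}}. w k)"

definition v_FO :: "nat \<Rightarrow> (nat \<Rightarrow> nat set) \<Rightarrow> (nat \<Rightarrow> real) \<Rightarrow> nat set \<Rightarrow> real" where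
  "v_FO m Auth w S = (\<Sum>k\<in>{k \<in> {1..m}. Auth k \<subseteq> S}. w k)"

definition PiTS :: "(nat \<Rightarrow> real) \<Rightarrow> nat set \<Rightarrow> nat set \<Rightarrow> real" where
  "PiTS p T S = (\<Prod>i\<in>T. p i) * (\<Prod>i\<in>S - T. 1 - p i)"

definition rel_ext :: "(nat \<Rightarrow> real) \<Rightarrow> (nat set \<Rightarrow> real) \<Rightarrow> nat set \<Rightarrow> real" where
  "rel_ext p v S = (\<Sum>T\<in>Pow S. v T * PiTS p T S)"

definition preds :: "nat list \<Rightarrow> nat \<Rightarrow> nat set" where
  "preds \<pi> x = set (takeWhile (\<lambda>y. y \<noteq> x) \<pi>)"

definition shapley :: "nat set \<Rightarrow> (nat set \<Rightarrow> real) \<Rightarrow> nat \<Rightarrow> real" where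
  "shapley N v x = (1 / fact (card N)) *
     (\<Sum>\<pi>\<in>{xs. distinct xs \<and> set xs = N}. v (preds \<pi> x \<union> {x}) - v (preds \<pi> x))"

end

theory Submission
  imports Defs "HOL-Combinatorics.Multiset_Permutations"
begin

lemma preds_fiber:
  assumes "finite A" "x \<in> A" "R \<subseteq> A - {x}"
  shows "{\<sigma> \<in> permutations_of_set A. preds \<sigma> x = R}
       = (\<lambda>(r,s). r @ x # s) ` (permutations_of_set R \<times> permutations_of_set (A - R - {x}))"
proof (intro equalityI subsetI)
  fix \<sigma> assume "\<sigma> \<in> {\<sigma> \<in> permutations_of_set A. preds \<sigma> x = R}"
  then have s: "set \<sigma> = A" "distinct \<sigma>" "set (takeWhile (\<lambda>y. y \<noteq> x) \<sigma>) = R"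
    by (auto simp: permutations_of_set_def preds_def)
  define r where "r = takeWhile (\<lambda>y. y \<noteq> x) \<sigma>"
  define d where "d = dropWhile (\<lambda>y. y \<noteq> x) \<sigma>"
  have "\<sigma> = r @ d" unfolding r_def d_def by simp
  moreover have "d \<noteq> []" using s assms unfolding d_def by (auto simp: dropWhile_eq_Nil_conv)
  moreover have "hd d = x" using s assms unfolding d_def
    by (metis (mono_tags) \<open>d \<noteq> []\<close> d_def hd_dropWhile)
  ultimately have eq: "\<sigma> = r @ x # tl d" by (metis list.collapse)
  have rR: "set r = R" using s(3) unfolding r_def .
  have ds: "distinct (r @ x # tl d)" "set (r @ x # tl d) = A" using s(1,2) eq by simp_all
  have "r \<in> permutations_of_set R" using ds rR by (auto simp: permutations_of_set_def)
  moreover have "tl d \<in> permutations_of_set (A - R - {x})"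
    using ds rR unfolding permutations_of_set_def by auto
  ultimately show "\<sigma> \<in> (\<lambda>(r,s). r @ x # s) ` (permutations_of_set R \<times> permutations_of_set (A - R - {x}))"
    using eq by (intro image_eqI[where x="(r, tl d)"]) auto
next
  fix \<sigma> assume "\<sigma> \<in> (\<lambda>(r,s). r @ x # s) ` (permutations_of_set R \<times> permutations_of_set (A - R - {x}))"
  then obtain r s where rs: "\<sigma> = r @ x # s" "r \<in> permutations_of_set R" "s \<in> permutations_of_set (A - R - {x})"
    by auto
  then have "set r = R" "distinct r" "set s = A - R - {x}" "distinct s"
    by (auto simp: permutations_of_set_def)
  then show "\<sigma> \<in> {\<sigma> \<in> permutations_of_set A. preds \<sigma> x = R}"
  proof -
    have xr: "x \<notin> set r" using \<open>set r = R\<close> assms(3) by auto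
    have tw: "takeWhile (\<lambda>y. y \<noteq> x) (r @ x # s) = r"
      using xr by (subst takeWhile_append2) auto
    show ?thesis using rs(1) assms \<open>set r = R\<close> \<open>distinct r\<close> \<open>set s = A - R - {x}\<close> \<open>distinct s\<close> xr
      by (auto simp: permutations_of_set_def preds_def tw)
  qed
qed

lemma card_preds_fiber:
  assumes "finite A" "x \<in> A" "R \<subseteq> A - {x}"
  shows "card {\<sigma> \<in> permutations_of_set A. preds \<sigma> x = R} = fact (card R) * fact (card A - 1 - card R)"
proof -
  have inj: "inj_on (\<lambda>(r,s). r @ x # s) (permutations_of_set R \<times> permutations_of_set (A - R - {x}))"
  proof (rule inj_onI)
    fix u v assume u: "u \<in> permutations_of_set R \<times> permutations_of_set (A - R - {x})"
      and v: "v \<in> permutations_of_set R \<times> permutations_of_set (A - R - {x})"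
      and eq: "(\<lambda>(r,s). r @ x # s) u = (\<lambda>(r,s). r @ x # s) v"
    obtain r s where us: "u = (r, s)" by force
    obtain r' s' where vs: "v = (r', s')" by force
    have "x \<notin> set r" "x \<notin> set s" using u us assms(3) by (auto simp: permutations_of_set_def)
    moreover have "r @ x # s = r' @ x # s'" using eq us vs by simp
    ultimately show "u = v" using us vs append_Cons_eq_iff by metis
  qed
  have fR: "finite R" using assms finite_subset by blast
  have "card (A - R - {x}) = card A - 1 - card R"
  proof -
    have "A - R - {x} = (A - {x}) - R" by auto
    then show ?thesis using assms fR by (simp add: card_Diff_subset)
  qed
  then show ?thesis unfolding preds_fiber[OF assms] card_image[OF inj]
    using assms fR by (simp add: card_cartesian_product)
qed


lemma sum_preds:
  fixes F :: "nat set \<Rightarrow> real"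
  assumes "finite A" "x \<in> A"
  shows "(\<Sum>\<sigma>\<in>permutations_of_set A. F (preds \<sigma> x))
       = (\<Sum>R\<in>Pow (A - {x}). F R * (fact (card R) * fact (card A - 1 - card R)))"
proof -
  have img: "(\<lambda>\<sigma>. preds \<sigma> x) ` permutations_of_set A \<subseteq> Pow (A - {x})"
    by (auto simp: permutations_of_set_def preds_def dest: set_takeWhileD)
  have "(\<Sum>\<sigma>\<in>permutations_of_set A. F (preds \<sigma> x))
     = (\<Sum>R\<in>Pow (A - {x}). \<Sum>\<sigma>\<in>{\<sigma> \<in> permutations_of_set A. preds \<sigma> x = R}. F (preds \<sigma> x))"
    by (rule sum.group[symmetric]) (use assms img in auto)
  also have "\<dots> = (\<Sum>R\<in>Pow (A - {x}). F R * (fact (card R) * fact (card A - 1 - card R)))"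
  proof (rule sum.cong[OF refl])
    fix R assume "R \<in> Pow (A - {x})"
    then have "(\<Sum>\<sigma>\<in>{\<sigma> \<in> permutations_of_set A. preds \<sigma> x = R}. F (preds \<sigma> x))
        = (\<Sum>\<sigma>\<in>{\<sigma> \<in> permutations_of_set A. preds \<sigma> x = R}. F R)" by simp
    also have "\<dots> = F R * (fact (card R) * fact (card A - 1 - card R))"
      using card_preds_fiber[OF assms, of R] \<open>R \<in> Pow (A - {x})\<close> by (simp add: mult.commute)
    finally show "(\<Sum>\<sigma>\<in>{\<sigma> \<in> permutations_of_set A. preds \<sigma> x = R}. F (preds \<sigma> x))
        = F R * (fact (card R) * fact (card A - 1 - card R))" .
  qed
  finally show ?thesis .
qed


lemma perms_eq: "{xs. distinct xs \<and> set xs = N} = permutations_of_set N"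
  unfolding permutations_of_set_def by auto

lemma sum_perms:
  fixes H :: "'a list \<Rightarrow> real"
  assumes "finite N" "N \<noteq> {}"
  shows "sum H (permutations_of_set N) = (\<Sum>y\<in>N. \<Sum>\<pi>\<in>permutations_of_set (N - {y}). H (y # \<pi>))"
proof -
  have "sum H (permutations_of_set N) = (\<Sum>y\<in>N. sum H ((#) y ` permutations_of_set (N - {y})))"
    unfolding permutations_of_set_nonempty[OF assms(2)]
    by (rule sum.UNION_disjoint) (use assms in auto)
  also have "\<dots> = (\<Sum>y\<in>N. \<Sum>\<pi>\<in>permutations_of_set (N - {y}). H (y # \<pi>))"
    by (rule sum.cong[OF refl], subst sum.reindex) (auto simp: inj_on_def)
  finally show ?thesis .
qed

lemma filter_restrict:
  fixes G :: "'a list \<Rightarrow> real"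
  shows "finite N \<Longrightarrow> A \<subseteq> N \<Longrightarrow>
    fact (card A) * (\<Sum>\<pi>\<in>permutations_of_set N. G (filter (\<lambda>y. y \<in> A) \<pi>))
    = fact (card N) * (\<Sum>\<sigma>\<in>permutations_of_set A. G \<sigma>)"
proof (induction "card N" arbitrary: N A G)
  case 0
  then show ?case by auto
next
  case (Suc k)
  have fA: "finite A" using Suc.prems finite_subset by blast
  have Nne: "N \<noteq> {}" using Suc.hyps by auto
  define S where "S = (\<Sum>\<sigma>\<in>permutations_of_set A. G \<sigma>)"
  have cN: "k = card (N - {y})" if "y \<in> N" for y using Suc.hyps that Suc.prems by auto
  have fil: "filter (\<lambda>z. z \<in> A) \<pi> = filter (\<lambda>z. z \<in> A - {y}) \<pi>"
    if "\<pi> \<in> permutations_of_set (N - {y})" for \<pi> y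
    using that by (auto simp: permutations_of_set_def intro!: filter_cong)
  have out: "fact (card A) * (\<Sum>\<pi>\<in>permutations_of_set (N - {y}). G (filter (\<lambda>z. z \<in> A) (y # \<pi>)))
      = fact k * S" if "y \<in> N - A" for y
  proof -
    have "A \<subseteq> N - {y}" using that Suc.prems by auto
    then show ?thesis
      using Suc.hyps(1)[OF cN[of y], of A G] that Suc.prems cN[of y] unfolding S_def by auto
  qed
  have inn: "fact (card A) * (\<Sum>\<pi>\<in>permutations_of_set (N - {y}). G (filter (\<lambda>z. z \<in> A) (y # \<pi>)))
      = real (card A) * (fact k * (\<Sum>\<sigma>\<in>permutations_of_set (A - {y}). G (y # \<sigma>)))" if "y \<in> A" for y
  proof -
    have cA: "card A = Suc (card (A - {y}))" using that fA
      by (metis card_Suc_Diff1)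
    have "(\<Sum>\<pi>\<in>permutations_of_set (N - {y}). G (filter (\<lambda>z. z \<in> A) (y # \<pi>)))
       = (\<Sum>\<pi>\<in>permutations_of_set (N - {y}). (\<lambda>s. G (y # s)) (filter (\<lambda>z. z \<in> A - {y}) \<pi>))"
      using that fil by (intro sum.cong) auto
    moreover have "fact (card (A - {y})) * (\<Sum>\<pi>\<in>permutations_of_set (N - {y}). (\<lambda>s. G (y # s)) (filter (\<lambda>z. z \<in> A - {y}) \<pi>))
       = fact k * (\<Sum>\<sigma>\<in>permutations_of_set (A - {y}). G (y # \<sigma>))"
      using Suc.hyps(1)[OF cN[of y], of "A - {y}" "\<lambda>s. G (y # s)"] that Suc.prems cN[of y] by auto
    ultimately show ?thesis unfolding cA fact_Suc by (simp add: algebra_simps)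
  qed
  have "fact (card A) * (\<Sum>\<pi>\<in>permutations_of_set N. G (filter (\<lambda>y. y \<in> A) \<pi>))
     = (\<Sum>y\<in>N. fact (card A) * (\<Sum>\<pi>\<in>permutations_of_set (N - {y}). G (filter (\<lambda>z. z \<in> A) (y # \<pi>))))"
    by (simp add: sum_perms[OF Suc.prems(1) Nne] sum_distrib_left)
  also have "\<dots> = (\<Sum>y\<in>N - A. fact (card A) * (\<Sum>\<pi>\<in>permutations_of_set (N - {y}). G (filter (\<lambda>z. z \<in> A) (y # \<pi>))))
      + (\<Sum>y\<in>A. fact (card A) * (\<Sum>\<pi>\<in>permutations_of_set (N - {y}). G (filter (\<lambda>z. z \<in> A) (y # \<pi>))))"
    using Suc.prems by (metis (no_types, lifting) add.commute sum.subset_diff)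
  also have "\<dots> = (\<Sum>y\<in>N - A. fact k * S) + (\<Sum>y\<in>A. real (card A) * (fact k * (\<Sum>\<sigma>\<in>permutations_of_set (A - {y}). G (y # \<sigma>))))"
    using out inn by (intro arg_cong2[where f="(+)"] sum.cong) auto
  also have "(\<Sum>y\<in>A. real (card A) * (fact k * (\<Sum>\<sigma>\<in>permutations_of_set (A - {y}). G (y # \<sigma>))))
      = real (card A) * fact k * S"
  proof (cases "A = {}")
    case True then show ?thesis by simp
  next
    case False
    show ?thesis unfolding S_def sum_perms[OF fA False] by (simp add: sum_distrib_left mult.assoc)
  qed
  also have "(\<Sum>y\<in>N - A. fact k * S) = real (card N - card A) * fact k * S"
    using Suc.prems fA by (simp add: card_Diff_subset)
  also have "real (card N - card A) * fact k * S + real (card A) * fact k * S = fact (card N) * S"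
  proof -
    have "card A \<le> card N" using Suc.prems card_mono by blast
    then have "real (card N - card A) + real (card A) = real (Suc k)" using Suc.hyps by simp
    then show ?thesis using Suc.hyps(2)[symmetric] by (simp add: fact_Suc algebra_simps)
  qed
  finally show ?case unfolding S_def .
qed

lemma preds_filter:
  assumes "x \<in> A"
  shows "preds \<pi> x \<inter> A = preds (filter (\<lambda>y. y \<in> A) \<pi>) x"
proof (induction \<pi>)
  case Nil
  then show ?case by (simp add: preds_def)
next
  case (Cons a \<pi>)
  show ?case
  proof (cases "a = x")
    case True
    then show ?thesis using assms by (simp add: preds_def)
  next
    case False
    then have "preds (a # \<pi>) x = insert a (preds \<pi> x)" by (simp add: preds_def)
    moreover have "preds (filter (\<lambda>y. y \<in> A) (a # \<pi>)) x
       = (if a \<in> A then insert a (preds (filter (\<lambda>y. y \<in> A) \<pi>) x) else preds (filter (\<lambda>y. y \<in> A) \<pi>) x)"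
      using False by (simp add: preds_def)
    ultimately show ?thesis using Cons.IH by auto
  qed
qed

lemma coef_eq:
  assumes "r < a"
  shows "fact r * fact (a - 1 - r) / fact a = 1 / (real (a - r) * real (a choose r))"
proof -
  obtain d where d: "a = Suc (r + d)" using assms less_imp_Suc_add by blast
  have "fact r * fact (a - r) * (a choose r) = fact a"
    using assms binomial_fact_lemma by simp
  then have "(fact r * fact (a - r) * (a choose r) :: real) = fact a"
    by (metis of_nat_fact of_nat_mult)
  moreover have "(fact (a - r) :: real) = real (a - r) * fact (a - 1 - r)"
  proof -
    have "a - r = Suc d" "a - 1 - r = d" using d by auto
    then show ?thesis by (simp only: fact_Suc of_nat_mult)
  qed
  ultimately have fa: "(fact a :: real) = (fact r * fact (a - 1 - r)) * (real (a - r) * real (a choose r))"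
    by (simp add: ac_simps)
  have "(fact r * fact (a - 1 - r) :: real) \<noteq> 0" by simp
  then show ?thesis unfolding fa by simp
qed


lemma shap_count:
  fixes F :: "nat set \<Rightarrow> real"
  assumes "finite N" "A \<subseteq> N" "x \<in> A"
  shows "(\<Sum>\<pi>\<in>permutations_of_set N. F (preds \<pi> x \<inter> A)) / fact (card N)
       = (\<Sum>R\<in>Pow (A - {x}). F R / (real (card A - card R) * real (card A choose card R)))"
proof -
  have fA: "finite A" using assms finite_subset by blast
  have "(\<Sum>\<pi>\<in>permutations_of_set N. F (preds \<pi> x \<inter> A))
      = (\<Sum>\<pi>\<in>permutations_of_set N. (\<lambda>\<sigma>. F (preds \<sigma> x)) (filter (\<lambda>y. y \<in> A) \<pi>))"
    using preds_filter[OF assms(3)] by (intro sum.cong) auto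
  then have "fact (card A) * (\<Sum>\<pi>\<in>permutations_of_set N. F (preds \<pi> x \<inter> A))
      = fact (card N) * (\<Sum>R\<in>Pow (A - {x}). F R * (fact (card R) * fact (card A - 1 - card R)))"
    using filter_restrict[OF assms(1,2), of "\<lambda>\<sigma>. F (preds \<sigma> x)"] sum_preds[OF fA assms(3)] by simp
  then have "(\<Sum>\<pi>\<in>permutations_of_set N. F (preds \<pi> x \<inter> A)) / fact (card N)
      = (\<Sum>R\<in>Pow (A - {x}). F R * (fact (card R) * fact (card A - 1 - card R))) / fact (card A)"
  proof -
    have "fact (card N) \<noteq> (0::real)" "fact (card A) \<noteq> (0::real)" by simp_all
    then show ?thesis using \<open>fact (card A) * _ = _\<close> by (subst frac_eq_eq) (simp_all add: mult.commute)
  qed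
  also have "\<dots> = (\<Sum>R\<in>Pow (A - {x}). F R * (fact (card R) * fact (card A - 1 - card R) / fact (card A)))"
    by (simp add: sum_divide_distrib)
  also have "\<dots> = (\<Sum>R\<in>Pow (A - {x}). F R / (real (card A - card R) * real (card A choose card R)))"
  proof (rule sum.cong[OF refl])
    fix R assume R: "R \<in> Pow (A - {x})"
    then have "card R \<le> card (A - {x})" using fA by (intro card_mono) auto
    moreover have "card A > 0" using fA assms(3) by (auto simp: card_gt_0_iff)
    moreover have "card (A - {x}) = card A - 1" using fA assms(3) by simp
    ultimately have "card R < card A" by linarith
    then show "F R * (fact (card R) * fact (card A - 1 - card R) / fact (card A))
        = F R / (real (card A - card R) * real (card A choose card R))"
      using coef_eq by simp
  qed
  finally show ?thesis .
qed



lemma sum_PiTS: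
  assumes "finite S"
  shows "(\<Sum>T\<in>Pow S. PiTS p T S) = 1"
proof -
  have "(\<Prod>i\<in>S. p i + (1 - p i)) = (\<Sum>T\<in>Pow S. (\<Prod>i\<in>T. p i) * (\<Prod>i\<in>S - T. 1 - p i))"
    by (rule prod_add[OF assms])
  then show ?thesis by (simp add: PiTS_def)
qed

lemma key_FC:
  assumes "finite S"
  shows "(\<Sum>T\<in>Pow S. (if A \<inter> T \<noteq> {} then 1 else 0) * PiTS p T S) = 1 - (\<Prod>i\<in>S \<inter> A. 1 - p i)"
proof -
  define p' where "p' i = (if i \<in> A then 0 else p i)" for i
  have eq: "(if A \<inter> T = {} then PiTS p T S else 0) = (\<Prod>i\<in>T. p' i) * (\<Prod>i\<in>S - T. 1 - p i)"
    if "T \<in> Pow S" for T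
  proof (cases "A \<inter> T = {}")
    case True
    then have "(\<Prod>i\<in>T. p' i) = (\<Prod>i\<in>T. p i)" unfolding p'_def by (intro prod.cong) auto
    then show ?thesis using True by (simp add: PiTS_def)
  next
    case False
    then obtain i where "i \<in> A" "i \<in> T" by auto
    moreover have "finite T" using that assms finite_subset by auto
    ultimately have "(\<Prod>i\<in>T. p' i) = 0" unfolding p'_def by (intro prod_zero) auto
    then show ?thesis using False by simp
  qed
  have "(\<Sum>T\<in>Pow S. (if A \<inter> T \<noteq> {} then 1 else 0) * PiTS p T S)
      = (\<Sum>T\<in>Pow S. PiTS p T S - (if A \<inter> T = {} then PiTS p T S else 0))"
    by (intro sum.cong) auto
  also have "\<dots> = 1 - (\<Sum>T\<in>Pow S. (\<Prod>i\<in>T. p' i) * (\<Prod>i\<in>S - T. 1 - p i))"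
    using eq sum_PiTS[OF assms, of p] by (simp add: sum_subtractf)
  also have "(\<Sum>T\<in>Pow S. (\<Prod>i\<in>T. p' i) * (\<Prod>i\<in>S - T. 1 - p i)) = (\<Prod>i\<in>S. p' i + (1 - p i))"
    by (rule prod_add[OF assms, symmetric])
  also have "\<dots> = (\<Prod>i\<in>S. if i \<in> A then 1 - p i else 1)"
    unfolding p'_def by (intro prod.cong) auto
  also have "\<dots> = (\<Prod>i\<in>S \<inter> A. 1 - p i)"
    by (rule prod.inter_restrict[OF assms, symmetric])
  finally show ?thesis .
qed

lemma key_FO:
  assumes "finite S"
  shows "(\<Sum>T\<in>Pow S. (if A \<subseteq> T then 1 else 0) * PiTS p T S) = (if A \<subseteq> S then (\<Prod>i\<in>A. p i) else 0)"
proof (cases "A \<subseteq> S")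
  case False
  then show ?thesis by (intro trans[OF sum.neutral]) auto
next
  case True
  define q where "q i = (if i \<in> A then 0 else 1 - p i)" for i
  have eq: "(if A \<subseteq> T then 1 else 0) * PiTS p T S = (\<Prod>i\<in>T. p i) * (\<Prod>i\<in>S - T. q i)"
    if "T \<in> Pow S" for T
  proof (cases "A \<subseteq> T")
    case True
    then have "(\<Prod>i\<in>S - T. q i) = (\<Prod>i\<in>S - T. 1 - p i)" unfolding q_def by (intro prod.cong) auto
    then show ?thesis using True by (simp add: PiTS_def)
  next
    case False
    then obtain i where "i \<in> A" "i \<notin> T" by auto
    then have "i \<in> S - T" using \<open>A \<subseteq> S\<close> by auto
    then have "(\<Prod>i\<in>S - T. q i) = 0" unfolding q_def using assms \<open>i \<in> A\<close> by (intro prod_zero) auto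
    then show ?thesis using False by simp
  qed
  have "(\<Sum>T\<in>Pow S. (if A \<subseteq> T then 1 else 0) * PiTS p T S) = (\<Sum>T\<in>Pow S. (\<Prod>i\<in>T. p i) * (\<Prod>i\<in>S - T. q i))"
    using eq by (intro sum.cong) auto
  also have "\<dots> = (\<Prod>i\<in>S. p i + q i)"
    by (rule prod_add[OF assms, symmetric])
  also have "\<dots> = (\<Prod>i\<in>S. if i \<in> A then p i else 1)"
    unfolding q_def by (intro prod.cong) auto
  also have "\<dots> = (\<Prod>i\<in>S \<inter> A. p i)"
    by (rule prod.inter_restrict[OF assms, symmetric])
  also have "S \<inter> A = A" using True by auto
  finally show ?thesis using True by simp
qed

lemma filt:
  fixes w :: "nat \<Rightarrow> real"
  shows "(\<Sum>k\<in>{k\<in>{1..m::nat}. P k}. w k) * c = (\<Sum>k\<in>{1..m}. w k * ((if P k then 1 else 0) * c))"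
proof -
  have "(\<Sum>k\<in>{k\<in>{1..m}. P k}. w k) = (\<Sum>k\<in>{1..m}. if P k then w k else 0)"
    by (rule sum.inter_filter) simp
  then show ?thesis by (simp add: sum_distrib_right) (intro sum.cong, auto)
qed

lemma rel_FC:
  assumes "finite S"
  shows "rel_ext p (v_FC m Auth w) S = (\<Sum>k\<in>{1..m}. w k * (1 - (\<Prod>i\<in>S \<inter> Auth k. 1 - p i)))"
proof -
  have "rel_ext p (v_FC m Auth w) S
      = (\<Sum>T\<in>Pow S. \<Sum>k\<in>{1..m}. w k * ((if Auth k \<inter> T \<noteq> {} then 1 else 0) * PiTS p T S))"
    unfolding rel_ext_def v_FC_def
    by (intro sum.cong refl filt)
  also have "\<dots> = (\<Sum>k\<in>{1..m}. w k * (\<Sum>T\<in>Pow S. (if Auth k \<inter> T \<noteq> {} then 1 else 0) * PiTS p T S))"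
    by (subst sum.swap) (simp add: sum_distrib_left)
  also have "\<dots> = (\<Sum>k\<in>{1..m}. w k * (1 - (\<Prod>i\<in>S \<inter> Auth k. 1 - p i)))"
    using key_FC[OF assms] by simp
  finally show ?thesis .
qed

lemma rel_FO:
  assumes "finite S"
  shows "rel_ext p (v_FO m Auth w) S = (\<Sum>k\<in>{1..m}. w k * (if Auth k \<subseteq> S then (\<Prod>i\<in>Auth k. p i) else 0))"
proof -
  have "rel_ext p (v_FO m Auth w) S
      = (\<Sum>T\<in>Pow S. \<Sum>k\<in>{1..m}. w k * ((if Auth k \<subseteq> T then 1 else 0) * PiTS p T S))"
    unfolding rel_ext_def v_FO_def
    by (intro sum.cong refl filt)
  also have "\<dots> = (\<Sum>k\<in>{1..m}. w k * (\<Sum>T\<in>Pow S. (if Auth k \<subseteq> T then 1 else 0) * PiTS p T S))"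
    by (subst sum.swap) (simp add: sum_distrib_left)
  also have "\<dots> = (\<Sum>k\<in>{1..m}. w k * (if Auth k \<subseteq> S then (\<Prod>i\<in>Auth k. p i) else 0))"
    using key_FO[OF assms] by simp
  finally show ?thesis .
qed



lemma preds_props:
  assumes "\<pi> \<in> permutations_of_set N"
  shows "finite (preds \<pi> x)" "x \<notin> preds \<pi> x" "preds \<pi> x \<subseteq> N"
  using assms by (auto simp: preds_def permutations_of_set_def dest: set_takeWhileD)

lemma swap_div:
  fixes c :: "nat \<Rightarrow> real"
  shows "(\<Sum>\<pi>\<in>P. \<Sum>k\<in>K. c k * f k \<pi>) / d = (\<Sum>k\<in>K. c k * ((\<Sum>\<pi>\<in>P. f k \<pi>) / d))"
proof -
  have "(\<Sum>\<pi>\<in>P. \<Sum>k\<in>K. c k * f k \<pi>) = (\<Sum>k\<in>K. c k * (\<Sum>\<pi>\<in>P. f k \<pi>))"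
    by (subst sum.swap) (simp add: sum_distrib_left)
  then have "(\<Sum>\<pi>\<in>P. \<Sum>k\<in>K. c k * f k \<pi>) / d = (\<Sum>k\<in>K. c k * (\<Sum>\<pi>\<in>P. f k \<pi>)) / d" by simp
  also have "\<dots> = (\<Sum>k\<in>K. c k * (\<Sum>\<pi>\<in>P. f k \<pi>) / d)" by (rule sum_divide_distrib)
  finally show ?thesis by (simp only: times_divide_eq_right)
qed

lemma Pap_sum:
  fixes g :: "nat \<Rightarrow> real"
  shows "(\<Sum>k\<in>{1..m}. if x \<in> Auth k then g k else 0) = (\<Sum>k\<in>Pap m Auth x. g k)"
  unfolding Pap_def by (rule sum.inter_filter[symmetric]) simp

lemma marg_FC:
  assumes "finite S" "x \<notin> S"
  shows "rel_ext p (v_FC m Auth w) (S \<union> {x}) - rel_ext p (v_FC m Auth w) S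
       = (\<Sum>k\<in>Pap m Auth x. w k * p x * (\<Prod>i\<in>S \<inter> Auth k. 1 - p i))"
proof -
  have "rel_ext p (v_FC m Auth w) (S \<union> {x}) - rel_ext p (v_FC m Auth w) S
      = (\<Sum>k\<in>{1..m}. w k * (1 - (\<Prod>i\<in>(S \<union> {x}) \<inter> Auth k. 1 - p i)) - w k * (1 - (\<Prod>i\<in>S \<inter> Auth k. 1 - p i)))"
    using rel_FC[of "S \<union> {x}"] rel_FC[of S] assms by (simp add: sum_subtractf)
  also have "\<dots> = (\<Sum>k\<in>{1..m}. if x \<in> Auth k then w k * p x * (\<Prod>i\<in>S \<inter> Auth k. 1 - p i) else 0)"
  proof (rule sum.cong[OF refl])
    fix k
    show "w k * (1 - (\<Prod>i\<in>(S \<union> {x}) \<inter> Auth k. 1 - p i)) - w k * (1 - (\<Prod>i\<in>S \<inter> Auth k. 1 - p i))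
        = (if x \<in> Auth k then w k * p x * (\<Prod>i\<in>S \<inter> Auth k. 1 - p i) else 0)"
    proof (cases "x \<in> Auth k")
      case True
      then have se: "(S \<union> {x}) \<inter> Auth k = insert x (S \<inter> Auth k)" by auto
      have e: "(\<Prod>i\<in>(S \<union> {x}) \<inter> Auth k. 1 - p i) = (1 - p x) * (\<Prod>i\<in>S \<inter> Auth k. 1 - p i)"
        unfolding se using assms by (subst prod.insert) auto
      show ?thesis using True unfolding e by (simp add: algebra_simps)
    next
      case False
      then have "(S \<union> {x}) \<inter> Auth k = S \<inter> Auth k" by auto
      then show ?thesis using False by simp
    qed
  qed
  also have "\<dots> = (\<Sum>k\<in>Pap m Auth x. w k * p x * (\<Prod>i\<in>S \<inter> Auth k. 1 - p i))"
    by (rule Pap_sum)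
  finally show ?thesis .
qed

lemma marg_FO:
  assumes "finite S" "x \<notin> S"
  shows "rel_ext p (v_FO m Auth w) (S \<union> {x}) - rel_ext p (v_FO m Auth w) S
       = (\<Sum>k\<in>Pap m Auth x. w k * (\<Prod>i\<in>Auth k. p i) * (if S \<inter> Auth k = Auth k - {x} then 1 else 0))"
proof -
  have "rel_ext p (v_FO m Auth w) (S \<union> {x}) - rel_ext p (v_FO m Auth w) S
      = (\<Sum>k\<in>{1..m}. w k * (if Auth k \<subseteq> S \<union> {x} then (\<Prod>i\<in>Auth k. p i) else 0) - w k * (if Auth k \<subseteq> S then (\<Prod>i\<in>Auth k. p i) else 0))"
    using rel_FO[of "S \<union> {x}"] rel_FO[of S] assms by (simp add: sum_subtractf)
  also have "\<dots> = (\<Sum>k\<in>{1..m}. if x \<in> Auth k then w k * (\<Prod>i\<in>Auth k. p i) * (if S \<inter> Auth k = Auth k - {x} then 1 else 0) else 0)"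
  proof (rule sum.cong[OF refl])
    fix k
    show "w k * (if Auth k \<subseteq> S \<union> {x} then (\<Prod>i\<in>Auth k. p i) else 0) - w k * (if Auth k \<subseteq> S then (\<Prod>i\<in>Auth k. p i) else 0)
        = (if x \<in> Auth k then w k * (\<Prod>i\<in>Auth k. p i) * (if S \<inter> Auth k = Auth k - {x} then 1 else 0) else 0)"
    proof (cases "x \<in> Auth k")
      case True
      then have "\<not> Auth k \<subseteq> S" using assms by auto
      moreover have "Auth k \<subseteq> S \<union> {x} \<longleftrightarrow> S \<inter> Auth k = Auth k - {x}" using assms True by auto
      ultimately show ?thesis using True by simp
    next
      case False
      then have "Auth k \<subseteq> S \<union> {x} \<longleftrightarrow> Auth k \<subseteq> S" by auto
      then show ?thesis using False by simp
    qed
  qed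
  also have "\<dots> = (\<Sum>k\<in>Pap m Auth x. w k * (\<Prod>i\<in>Auth k. p i) * (if S \<inter> Auth k = Auth k - {x} then 1 else 0))"
    by (rule Pap_sum)
  finally show ?thesis .
qed

lemma shapley_alt:
  "shapley N v x = (\<Sum>\<pi>\<in>permutations_of_set N. v (preds \<pi> x \<union> {x}) - v (preds \<pi> x)) / fact (card N)"
  unfolding shapley_def perms_eq by simp

theorem theorem2:
  fixes n m :: nat and Auth :: "nat \<Rightarrow> nat set" and w :: "nat \<Rightarrow> real" and p :: "nat \<Rightarrow> real"
    and x :: nat
  assumes auth_ne: "\<And>k. k \<in> {1..m} \<Longrightarrow> Auth k \<noteq> {}"
    and auth_sub: "\<And>k. k \<in> {1..m} \<Longrightarrow> Auth k \<subseteq> {1..n}"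
    and w_nonneg: "\<And>k. k \<in> {1..m} \<Longrightarrow> w k \<ge> 0"
    and p_range: "\<And>i. i \<in> {1..n} \<Longrightarrow> 0 \<le> p i \<and> p i \<le> 1"
    and x_in: "x \<in> {1..n}"
  shows "(shapley {1..n} (rel_ext p (v_FC m Auth w)) x =
           p x * (\<Sum>k\<in>Pap m Auth x. w k *
              (\<Sum>S\<in>Pow (Auth k - {x}).
                 PiTS p {} S / (real (card (Auth k) - card S) * real (card (Auth k) choose card S))))) \<and>
         (shapley {1..n} (rel_ext p (v_FO m Auth w)) x =
           (\<Sum>k\<in>Pap m Auth x. w k / real (card (Auth k)) * PiTS p (Auth k) (Auth k)))"
proof
  define N where "N = {1..n}"
  have fN: "finite N" unfolding N_def by simp
  have papk: "Auth k \<subseteq> N" "x \<in> Auth k" if "k \<in> Pap m Auth x" for k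
    using that auth_sub unfolding Pap_def N_def by auto
  let ?P = "permutations_of_set N"
  show "shapley {1..n} (rel_ext p (v_FC m Auth w)) x =
           p x * (\<Sum>k\<in>Pap m Auth x. w k *
              (\<Sum>S\<in>Pow (Auth k - {x}).
                 PiTS p {} S / (real (card (Auth k) - card S) * real (card (Auth k) choose card S))))"
  proof -
    have "shapley N (rel_ext p (v_FC m Auth w)) x
        = (\<Sum>\<pi>\<in>?P. \<Sum>k\<in>Pap m Auth x. (w k * p x) * (\<lambda>k R. \<Prod>i\<in>R. 1 - p i) k (preds \<pi> x \<inter> Auth k)) / fact (card N)"
      unfolding shapley_alt using marg_FC preds_props by (intro arg_cong2[where f="(/)"] sum.cong) auto
    also have "\<dots> = (\<Sum>k\<in>Pap m Auth x. (w k * p x) * ((\<Sum>\<pi>\<in>?P. (\<lambda>k R. \<Prod>i\<in>R. 1 - p i) k (preds \<pi> x \<inter> Auth k)) / fact (card N)))"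
      by (rule swap_div)
    also have "\<dots> = (\<Sum>k\<in>Pap m Auth x. (w k * p x) * (\<Sum>R\<in>Pow (Auth k - {x}). (\<Prod>i\<in>R. 1 - p i) / (real (card (Auth k) - card R) * real (card (Auth k) choose card R))))"
      using shap_count[OF fN papk] by (intro sum.cong refl) simp
    also have "\<dots> = p x * (\<Sum>k\<in>Pap m Auth x. w k *
              (\<Sum>S\<in>Pow (Auth k - {x}).
                 PiTS p {} S / (real (card (Auth k) - card S) * real (card (Auth k) choose card S))))"
      by (simp add: sum_distrib_left PiTS_def mult_ac)
    finally show ?thesis unfolding N_def .
  qed
  show "shapley {1..n} (rel_ext p (v_FO m Auth w)) x =
           (\<Sum>k\<in>Pap m Auth x. w k / real (card (Auth k)) * PiTS p (Auth k) (Auth k))"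
  proof -
    have "shapley N (rel_ext p (v_FO m Auth w)) x
        = (\<Sum>\<pi>\<in>?P. \<Sum>k\<in>Pap m Auth x. (w k * (\<Prod>i\<in>Auth k. p i)) * (\<lambda>k R. if R = Auth k - {x} then 1 else 0) k (preds \<pi> x \<inter> Auth k)) / fact (card N)"
      unfolding shapley_alt using marg_FO preds_props by (intro arg_cong2[where f="(/)"] sum.cong) auto
    also have "\<dots> = (\<Sum>k\<in>Pap m Auth x. (w k * (\<Prod>i\<in>Auth k. p i)) * ((\<Sum>\<pi>\<in>?P. (\<lambda>k R. if R = Auth k - {x} then 1 else 0) k (preds \<pi> x \<inter> Auth k)) / fact (card N)))"
      by (rule swap_div)
    also have "\<dots> = (\<Sum>k\<in>Pap m Auth x. w k / real (card (Auth k)) * PiTS p (Auth k) (Auth k))"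
    proof (rule sum.cong[OF refl])
      fix k assume k: "k \<in> Pap m Auth x"
      define A where "A = Auth k"
      have fA: "finite A" using papk[OF k] fN finite_subset unfolding A_def by blast
      have xA: "x \<in> A" using papk[OF k] unfolding A_def by simp
      have cA: "card A \<ge> 1" using fA xA by (metis One_nat_def Suc_leI card_gt_0_iff empty_iff)
      have cAx: "card (A - {x}) = card A - 1" using fA xA by simp
      have "(\<Sum>\<pi>\<in>?P. (\<lambda>k R. if R = Auth k - {x} then 1 else 0) k (preds \<pi> x \<inter> Auth k)) / fact (card N)
          = (\<Sum>R\<in>Pow (A - {x}). (if R = A - {x} then 1 else 0) / (real (card A - card R) * real (card A choose card R)))"
        using shap_count[OF fN papk[OF k], of "\<lambda>R. if R = Auth k - {x} then 1 else 0"] unfolding A_def by simp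
      also have "\<dots> = 1 / (real (card A - card (A - {x})) * real (card A choose card (A - {x})))"
        using fA by (simp add: if_distrib[where f="\<lambda>z. z / _"] cong: if_cong)
      also have "\<dots> = 1 / real (card A)"
      proof -
        have "card A - card (A - {x}) = 1" using cAx cA by simp
        moreover have "card A choose card (A - {x}) = card A"
          using cAx cA binomial_symmetric[of 1 "card A"] by simp
        ultimately show ?thesis by simp
      qed
      finally show "(w k * (\<Prod>i\<in>Auth k. p i)) * ((\<Sum>\<pi>\<in>?P. (\<lambda>k R. if R = Auth k - {x} then 1 else 0) k (preds \<pi> x \<inter> Auth k)) / fact (card N))
          = w k / real (card (Auth k)) * PiTS p (Auth k) (Auth k)"
        unfolding A_def by (simp add: PiTS_def)
    qed
    finally show ?thesis unfolding N_def .
  qed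
qed


end
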